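(* Let $n\ge1$ and $w=\sqrt{(1-x)/(1+x)}$. Then \[R_n^{B,>}(x)=\frac{x}{2}\Big(\frac{1+x}{2}\Big)^{n-1}(1+w)^n\,B_n\!\Big(\frac{1-w}{1+w}\Big).\]
   Context: $\mathfrak B_n$ is the set of signed permutations $\pi=\pi_1\cdots\pi_n$ (words over $\{\pm1,\dots,\pm n\}$ with $|\pi_1|,\dots,|\pi_n|$ a permutation of $[n]$), compared as integers; set $\pi_0=0$. $\mathrm{run}_B(\pi)$ is $1$ plus the number of $i\in\{1,\dots,n-1\}$ with $\pi_{i-1}<\pi_i>\pi_{i+1}$ or $\pi_{i-1}>\pi_i<\pi_{i+1}$, and $R_n^{B,>}(x)=\sum_{\pi\in\mathfrak B_n,\ \pi_1>0}x^{\mathrm{run}_B(\pi)}$. $\mathrm{des}_B(\pi)=\#\{i\in\{0,\dots,n-1\}:\pi_i>\pi_{i+1}\}$ and $B_n(t)=\sum_{\pi\in\mathfrak B_n}t^{\mathrm{des}_B(\pi)}$ is the type B Eulerian polynomial. (The right-hand side, expanded, is a polynomial in $x$; the identity is one of rational functions in $x$ and $w$ with $w^2=(1-x)/(1+x)$.) *)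

theory Defs
  imports Complex_Main
begin

definition signed_perms :: "nat \<Rightarrow> int list set" where
  "signed_perms n = {ps. length ps = n \<and> distinct (map abs ps) \<and> set (map abs ps) = {1..int n}}"

text \<open>With pi_0 = 0, the word 0 # ps has pi_i at index i.\<close>
definition runB :: "int list \<Rightarrow> nat" where
  "runB ps = (let p = 0 # ps; n = length ps in
     1 + card {i \<in> {1..n-1}. (p!(i-1) < p!i \<and> p!i > p!(i+1)) \<or> (p!(i-1) > p!i \<and> p!i < p!(i+1))})"

definition desB :: "int list \<Rightarrow> nat" where
  "desB ps = (let p = 0 # ps; n = length ps in card {i \<in> {0..n-1}. p!i > p!(i+1)})"

definition R_B_pos :: "nat \<Rightarrow> 'a::comm_semiring_1 \<Rightarrow> 'a" where
  "R_B_pos n x = (\<Sum>ps\<in>{ps \<in> signed_perms n. ps!0 > 0}. x ^ runB ps)"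

definition eulerB :: "nat \<Rightarrow> 'a::comm_semiring_1 \<Rightarrow> 'a" where
  "eulerB n t = (\<Sum>ps\<in>signed_perms n. t ^ desB ps)"

end

theory Submission
  imports Defs
begin


fun ch :: "bool list \<Rightarrow> nat" where
  "ch (a # b # xs) = (if a \<noteq> b then 1 else 0) + ch (b # xs)"
| "ch _ = 0"

lemma ch_append: "ch (xs @ ys) = ch xs + ch ys + (if xs \<noteq> [] \<and> ys \<noteq> [] \<and> last xs \<noteq> hd ys then 1 else 0)"
proof (induction xs rule: ch.induct)
  case (1 a b xs) then show ?case by simp
next
  case ("2_1") then show ?case by simp
next
  case ("2_2" a) then show ?case by (cases ys) auto
qed

lemma ch_le: "ch e \<le> length e - 1"
  by (induction e rule: ch.induct) auto

lemma last_take: "0 < j \<Longrightarrow> j \<le> length e \<Longrightarrow> last (take j e) = e!(j-1)"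
  by (cases j) (auto simp: take_Suc_conv_app_nth)

lemma ch_split:
  assumes "j < length e"
  shows "ch e = ch (take j e) + ch (drop (Suc j) e)
     + (if 0 < j \<and> e!(j-1) \<noteq> e!j then 1 else 0) + (if Suc j < length e \<and> e!j \<noteq> e!(Suc j) then 1 else 0)"
proof -
  have e: "e = take j e @ [e!j] @ drop (Suc j) e"
    using assms by (simp add: Cons_nth_drop_Suc)
  have l: "0 < j \<Longrightarrow> last (take j e) = e!(j-1)"
    using assms by (simp add: last_take)
  have h: "Suc j < length e \<Longrightarrow> hd (drop (Suc j) e) = e!(Suc j)"
    using assms by (simp add: hd_drop_conv_nth)
  have "ch e = ch (take j e @ [e!j] @ drop (Suc j) e)" by (rule arg_cong[OF e])
  also have "\<dots> = ch (take j e) + ch ([e!j] @ drop (Suc j) e) + (if take j e \<noteq> [] \<and> last (take j e) \<noteq> e!j then 1 else 0)"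
    using ch_append[of "take j e" "[e!j] @ drop (Suc j) e"] by simp
  also have "ch ([e!j] @ drop (Suc j) e) = ch (drop (Suc j) e) + (if drop (Suc j) e \<noteq> [] \<and> e!j \<noteq> hd (drop (Suc j) e) then 1 else 0)"
    using ch_append[of "[e!j]" "drop (Suc j) e"] by simp
  finally have calc: "ch e = ch (take j e) + (ch (drop (Suc j) e) + (if drop (Suc j) e \<noteq> [] \<and> e!j \<noteq> hd (drop (Suc j) e) then 1 else 0)) + (if take j e \<noteq> [] \<and> last (take j e) \<noteq> e!j then 1 else 0)" .
  have A: "(if take j e \<noteq> [] \<and> last (take j e) \<noteq> e!j then 1 else 0) = (if 0 < j \<and> e!(j-1) \<noteq> e!j then 1 else (0::nat))"
    using assms l by auto
  have B: "(if drop (Suc j) e \<noteq> [] \<and> e!j \<noteq> hd (drop (Suc j) e) then 1 else 0) = (if Suc j < length e \<and> e!j \<noteq> e!(Suc j) then 1 else (0::nat))"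
    using assms h by auto
  show ?thesis using calc unfolding A B by linarith
qed

lemma ch_sum: "ch e = (\<Sum>i<length e - 1. if e!i \<noteq> e!(Suc i) then 1 else 0)"
proof (induction e rule: ch.induct)
  case (1 a b xs)
  have "(\<Sum>i<Suc (length xs). if (a#b#xs)!i \<noteq> (a#b#xs)!(Suc i) then 1 else 0)
     = (if (a#b#xs)!0 \<noteq> (a#b#xs)!(Suc 0) then 1 else 0) + (\<Sum>i<length xs. if (a#b#xs)!Suc i \<noteq> (a#b#xs)!(Suc (Suc i)) then 1 else 0::nat)"
    by (rule sum.lessThan_Suc_shift)
  then show ?case using 1 by simp
qed auto

lemma sum_k1: "(\<Sum>j<length e. if 0 < j \<and> e!(j-1) \<noteq> e!j then 1 else 0) = ch e"
proof (cases e)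
  case Nil then show ?thesis by simp
next
  case (Cons a xs)
  let ?g = "\<lambda>j. if 0 < j \<and> e!(j-1) \<noteq> e!j then 1 else 0::nat"
  have "(\<Sum>j<length e. ?g j) = (\<Sum>j<Suc (length xs). ?g j)" using Cons by simp
  also have "\<dots> = ?g 0 + (\<Sum>j<length xs. ?g (Suc j))" by (rule sum.lessThan_Suc_shift)
  also have "\<dots> = (\<Sum>j<length e - 1. if e!j \<noteq> e!Suc j then 1 else 0)" using Cons by simp
  finally show ?thesis by (simp only: ch_sum)
qed

lemma sum_k2: "(\<Sum>j<length e. if Suc j < length e \<and> e!j \<noteq> e!(Suc j) then 1 else 0) = ch e"
proof (cases e)
  case Nil then show ?thesis by simp
next
  case (Cons a xs)
  have "(\<Sum>j<length e. if Suc j < length e \<and> e!j \<noteq> e!(Suc j) then 1 else 0::nat)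
       = (\<Sum>j<length e - 1. if Suc j < length e \<and> e!j \<noteq> e!(Suc j) then 1 else 0)"
    using Cons by (simp add: sum.lessThan_Suc)
  also have "\<dots> = (\<Sum>j<length e - 1. if e!j \<noteq> e!(Suc j) then 1 else 0)"
    by (rule sum.cong) auto
  finally show ?thesis by (simp add: ch_sum)
qed

definition UD :: "nat \<Rightarrow> bool list \<Rightarrow> bool list" where
  "UD j e = take j e @ [False, True] @ drop (Suc j) e"
definition DU :: "nat \<Rightarrow> bool list \<Rightarrow> bool list" where
  "DU j e = take j e @ [True, False] @ drop (Suc j) e"

lemma ch_ins:
  assumes "j < length e" and "a \<noteq> b"
  shows "ch (take j e @ [a, b] @ drop (Suc j) e) = ch (take j e) + ch (drop (Suc j) e) + 1
     + (if 0 < j \<and> e!(j-1) \<noteq> a then 1 else 0) + (if Suc j < length e \<and> b \<noteq> e!(Suc j) then 1 else 0)"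
proof -
  have l: "0 < j \<Longrightarrow> last (take j e) = e!(j-1)"
    using assms by (simp add: last_take)
  have h: "Suc j < length e \<Longrightarrow> hd (drop (Suc j) e) = e!(Suc j)"
    using assms by (simp add: hd_drop_conv_nth)
  have c1: "ch (take j e @ [a, b] @ drop (Suc j) e) = ch (take j e) + ch ([a,b] @ drop (Suc j) e) + (if take j e \<noteq> [] \<and> last (take j e) \<noteq> a then 1 else 0)"
    using ch_append[of "take j e" "[a,b] @ drop (Suc j) e"] by simp
  have c2: "ch ([a,b] @ drop (Suc j) e) = 1 + ch (drop (Suc j) e) + (if drop (Suc j) e \<noteq> [] \<and> b \<noteq> hd (drop (Suc j) e) then 1 else 0)"
    using assms(2) ch_append[of "[a,b]" "drop (Suc j) e"] by simp
  have A: "(if take j e \<noteq> [] \<and> last (take j e) \<noteq> a then 1 else 0) = (if 0 < j \<and> e!(j-1) \<noteq> a then 1 else (0::nat))"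
    using assms l by auto
  have B: "(if drop (Suc j) e \<noteq> [] \<and> b \<noteq> hd (drop (Suc j) e) then 1 else 0) = (if Suc j < length e \<and> b \<noteq> e!(Suc j) then 1 else (0::nat))"
    using assms h by auto
  show ?thesis using c1 c2 unfolding A B by linarith
qed

lemma slot_abs:
  fixes f :: "nat \<Rightarrow> 'a::comm_ring_1"
  assumes "c = L + (if P \<and> A \<noteq> B then 1 else 0) + (if Q \<and> B \<noteq> C then 1 else 0)"
    and "u1 = L + 1 + (if P \<and> A \<noteq> False then 1 else 0) + (if Q \<and> True \<noteq> C then 1 else 0)"
    and "u2 = L + 1 + (if P \<and> A \<noteq> True then 1 else 0) + (if Q \<and> False \<noteq> C then 1 else 0)"
    and "a = (if P then 1 else 0) + (if Q then 1 else 0)"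
    and "k = (if P \<and> A \<noteq> B then 1 else 0) + (if Q \<and> B \<noteq> C then 1 else 0)"
  shows "f u1 + f u2 = of_nat (a - k) * f (Suc (Suc c)) + of_nat (2 - a) * f (Suc c) + of_nat k * f c"
  using assms
  by (cases P; cases Q; cases A; cases B; cases C) simp_all

lemma slot:
  fixes f :: "nat \<Rightarrow> 'a::comm_ring_1"
  assumes "j < length e"
  shows "f (ch (UD j e)) + f (ch (DU j e)) = of_nat (((if 0 < j then 1 else 0::nat) + (if Suc j < length e then 1 else 0)) - ((if 0 < j \<and> e!(j-1) \<noteq> e!j then 1 else 0::nat) + (if Suc j < length e \<and> e!j \<noteq> e!(Suc j) then 1 else 0))) * f (Suc (Suc (ch e)))
     + of_nat (2 - ((if 0 < j then 1 else 0::nat) + (if Suc j < length e then 1 else 0))) * f (Suc (ch e))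
     + of_nat ((if 0 < j \<and> e!(j-1) \<noteq> e!j then 1 else 0::nat) + (if Suc j < length e \<and> e!j \<noteq> e!(Suc j) then 1 else 0)) * f (ch e)"
  unfolding UD_def DU_def
  by (rule slot_abs[OF ch_split[OF assms(1)] ch_ins[OF assms(1), of False True] ch_ins[OF assms(1), of True False]]) auto



lemma sum_a1: "(\<Sum>j<n. if 0 < j then 1 else 0::nat) = n - 1"
proof -
  have "(\<Sum>j<n. if 0 < j then 1 else 0::nat) = card {j. j < n \<and> 0 < j}"
    by (simp add: sum.If_cases Int_def)
  also have "{j. j < n \<and> 0 < j} = {1..<n}" by auto
  finally show ?thesis by simp
qed

lemma sum_a2: "(\<Sum>j<n. if Suc j < n then 1 else 0::nat) = n - 1"
proof -
  have "(\<Sum>j<n. if Suc j < n then 1 else 0::nat) = card {j. j < n \<and> Suc j < n}"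
    by (simp add: sum.If_cases Int_def)
  also have "{j. j < n \<and> Suc j < n} = {..<n-1}" by auto
  finally show ?thesis by simp
qed

lemma ch_snoc: "e \<noteq> [] \<Longrightarrow> ch (e @ [b]) = ch e + (if last e \<noteq> b then 1 else 0)"
  using ch_append[of e "[b]"] by simp

lemma word_runs:
  fixes f :: "nat \<Rightarrow> 'a::comm_ring_1"
  assumes "e \<noteq> []"
  shows "(\<Sum>j<length e. f (ch (UD j e)) + f (ch (DU j e))) + f (ch (e @ [False])) + f (ch (e @ [True]))
    = of_nat (2 * length e - 2 - 2 * ch e) * f (Suc (Suc (ch e))) + 3 * f (Suc (ch e)) + of_nat (2 * ch e + 1) * f (ch e)"
proof -
  define n where "n = length e"
  define c where "c = ch e"
  define a where "a = (\<lambda>j. (if 0 < j then 1 else 0::nat) + (if Suc j < n then 1 else 0))"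
  define k where "k = (\<lambda>j. (if 0 < j \<and> e!(j-1) \<noteq> e!j then 1 else 0::nat) + (if Suc j < n \<and> e!j \<noteq> e!(Suc j) then 1 else 0))"
  have n1: "n \<ge> 1" using assms n_def by (cases e) auto
  have cle: "c \<le> n - 1" using ch_le c_def n_def by simp
  have ka: "k j \<le> a j" for j unfolding a_def k_def by auto
  have sa: "(\<Sum>j<n. a j) = 2 * n - 2"
    unfolding a_def sum.distrib sum_a1 sum_a2 using n1 by simp
  have sk: "(\<Sum>j<n. k j) = 2 * c"
    unfolding k_def sum.distrib n_def c_def sum_k1 sum_k2 by simp
  have s2a: "(\<Sum>j<n. 2 - a j) = 2"
  proof -
    have "a j \<le> 2" for j unfolding a_def by auto
    then have "(\<Sum>j<n. 2 - a j) + (\<Sum>j<n. a j) = (\<Sum>j<n. 2::nat)"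
      by (simp add: sum.distrib[symmetric])
    then show ?thesis using sa n1 by simp
  qed
  have "(\<Sum>j<length e. f (ch (UD j e)) + f (ch (DU j e)))
      = (\<Sum>j<n. of_nat (a j - k j) * f (Suc (Suc c)) + of_nat (2 - a j) * f (Suc c) + of_nat (k j) * f c)"
    unfolding n_def a_def k_def c_def by (rule sum.cong[OF refl]) (rule slot, simp)
  also have "\<dots> = of_nat (\<Sum>j<n. a j - k j) * f (Suc (Suc c)) + of_nat (\<Sum>j<n. 2 - a j) * f (Suc c) + of_nat (\<Sum>j<n. k j) * f c"
    by (simp add: sum.distrib sum_distrib_right)
  also have "(\<Sum>j<n. a j - k j) = 2 * n - 2 - 2 * c"
  proof -
    have "(\<Sum>j<n. a j - k j) + (\<Sum>j<n. k j) = (\<Sum>j<n. a j)"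
      using ka by (simp add: sum.distrib[symmetric])
    then show ?thesis using sa sk by simp
  qed
  finally have S: "(\<Sum>j<length e. f (ch (UD j e)) + f (ch (DU j e)))
      = of_nat (2 * n - 2 - 2 * c) * f (Suc (Suc c)) + 2 * f (Suc c) + of_nat (2 * c) * f c"
    using s2a sk by simp
  have T: "f (ch (e @ [False])) + f (ch (e @ [True])) = f (Suc c) + f c"
    using ch_snoc[OF assms] unfolding c_def by (cases "last e") auto
  show ?thesis unfolding S[unfolded n_def c_def] add.assoc T[unfolded c_def]
    by (simp add: algebra_simps)
qed

definition cnt :: "bool list \<Rightarrow> nat" where "cnt e = length (filter id e)"

lemma cnt_split: "j < length e \<Longrightarrow> cnt e = cnt (take j e) + (if e!j then 1 else 0) + cnt (drop (Suc j) e)"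
proof -
  assume j: "j < length e"
  have "e = take j e @ [e!j] @ drop (Suc j) e" using j by (simp add: Cons_nth_drop_Suc)
  then have "cnt e = cnt (take j e @ [e!j] @ drop (Suc j) e)" by (rule arg_cong)
  then show ?thesis unfolding cnt_def by simp
qed

lemma cnt_UD: "j < length e \<Longrightarrow> cnt (UD j e) = cnt e - (if e!j then 1 else 0) + 1"
  using cnt_split[of j e] unfolding UD_def by (simp add: cnt_def)
lemma cnt_DU: "j < length e \<Longrightarrow> cnt (DU j e) = cnt e - (if e!j then 1 else 0) + 1"
  using cnt_split[of j e] unfolding DU_def by (simp add: cnt_def)

lemma cnt_le: "cnt e \<le> length e" unfolding cnt_def by simp

lemma sum_bool_list:
  fixes g :: "bool \<Rightarrow> 'a::comm_ring_1"
  shows "(\<Sum>j<length e. g (e!j)) = of_nat (cnt e) * g True + of_nat (length e - cnt e) * g False"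
proof -
  have "(\<Sum>j<length e. g (e!j)) = sum_list (map g e)"
    by (simp add: sum_list_sum_nth atLeast0LessThan)
  also have "\<dots> = of_nat (cnt e) * g True + of_nat (length e - cnt e) * g False"
  proof (induction e)
    case Nil then show ?case by (simp add: cnt_def)
  next
    case (Cons b e)
    have le: "cnt e \<le> length e" by (rule cnt_le)
    show ?case
    proof (cases b)
      case True then show ?thesis using Cons by (simp add: cnt_def algebra_simps)
    next
      case False
      then have "length (b#e) - cnt (b#e) = Suc (length e - cnt e)" using le by (simp add: cnt_def Suc_diff_le)
      then show ?thesis using Cons False by (simp add: cnt_def algebra_simps)
    qed
  qed
  finally show ?thesis .
qed

lemma cnt_UD': 
  assumes j: "j < length e"
  shows "cnt (UD j e) = (if e!j then cnt e else Suc (cnt e))"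
proof -
  have a: "cnt (UD j e) = cnt e - (if e!j then 1 else 0) + 1" by (rule cnt_UD[OF j])
  have b: "cnt e = cnt (take j e) + (if e!j then 1 else 0) + cnt (drop (Suc j) e)" by (rule cnt_split[OF j])
  show ?thesis using a b by (cases "e!j") simp_all
qed
lemma cnt_DU': 
  assumes j: "j < length e"
  shows "cnt (DU j e) = (if e!j then cnt e else Suc (cnt e))"
proof -
  have a: "cnt (DU j e) = cnt e - (if e!j then 1 else 0) + 1" by (rule cnt_DU[OF j])
  have b: "cnt e = cnt (take j e) + (if e!j then 1 else 0) + cnt (drop (Suc j) e)" by (rule cnt_split[OF j])
  show ?thesis using a b by (cases "e!j") simp_all
qed

lemma word_des:
  fixes f :: "nat \<Rightarrow> 'a::comm_ring_1"
  shows "(\<Sum>j<length e. f (cnt (UD j e)) + f (cnt (DU j e))) + f (cnt (e @ [False])) + f (cnt (e @ [True]))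
    = of_nat (2 * (length e - cnt e) + 1) * f (Suc (cnt e)) + of_nat (2 * cnt e + 1) * f (cnt e)"
proof -
  define g where "g = (\<lambda>b. f (if b then cnt e else Suc (cnt e)) + f (if b then cnt e else Suc (cnt e)))"
  have "(\<Sum>j<length e. f (cnt (UD j e)) + f (cnt (DU j e))) = (\<Sum>j<length e. g (e!j))"
  proof (rule sum.cong[OF refl])
    fix j assume "j \<in> {..<length e}"
    then have j: "j < length e" by simp
    show "f (cnt (UD j e)) + f (cnt (DU j e)) = g (e!j)" unfolding cnt_UD'[OF j] cnt_DU'[OF j] g_def ..
  qed
  also have "\<dots> = of_nat (cnt e) * g True + of_nat (length e - cnt e) * g False"
    by (rule sum_bool_list)
  finally have S: "(\<Sum>j<length e. f (cnt (UD j e)) + f (cnt (DU j e))) = of_nat (cnt e) * (f (cnt e) + f (cnt e)) + of_nat (length e - cnt e) * (f (Suc (cnt e)) + f (Suc (cnt e)))" 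
    unfolding g_def by simp
  have T: "f (cnt (e @ [False])) + f (cnt (e @ [True])) = f (cnt e) + f (Suc (cnt e))"
    by (simp add: cnt_def)
  show ?thesis unfolding add.assoc T unfolding S by (simp only: of_nat_add of_nat_mult of_nat_1 of_nat_numeral) (simp add: algebra_simps)
qed


fun udw :: "int \<Rightarrow> int list \<Rightarrow> bool list" where
  "udw a [] = []"
| "udw a (x # xs) = (a > x) # udw x xs"

definition ud :: "int list \<Rightarrow> bool list" where "ud ps = udw 0 ps"

lemma length_udw[simp]: "length (udw a xs) = length xs"
  by (induction xs arbitrary: a) auto

lemma nth_udw: "i < length xs \<Longrightarrow> udw a xs ! i = ((a#xs)!i > (a#xs)!(Suc i))"
proof (induction xs arbitrary: a i)
  case Nil then show ?case by simp
next
  case (Cons x xs) then show ?case by (cases i) auto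
qed

lemma udw_append: "udw a (xs @ ys) = udw a xs @ udw (last (a#xs)) ys"
  by (induction xs arbitrary: a) auto

definition ins :: "nat \<Rightarrow> int \<Rightarrow> int list \<Rightarrow> int list" where
  "ins j v ps = take j ps @ v # drop j ps"

lemma ud_ins_gen:
  assumes "j < length ps"
  shows "ud (ins j v ps) = take j (ud ps) @ [last (0 # take j ps) > v, v > ps!j] @ drop (Suc j) (ud ps)"
proof -
  have d: "drop j ps = ps!j # drop (Suc j) ps" using assms by (simp add: Cons_nth_drop_Suc)
  have "ud ps = udw 0 (take j ps @ drop j ps)" unfolding ud_def by simp
  also have "\<dots> = udw 0 (take j ps) @ (last (0 # take j ps) > ps!j) # udw (ps!j) (drop (Suc j) ps)"
    unfolding udw_append d by simp
  finally have u: "ud ps = udw 0 (take j ps) @ (last (0 # take j ps) > ps!j) # udw (ps!j) (drop (Suc j) ps)" .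
  have l: "length (udw 0 (take j ps)) = j" using assms by simp
  have t: "take j (ud ps) = udw 0 (take j ps)" unfolding u using l by simp
  have dr: "drop (Suc j) (ud ps) = udw (ps!j) (drop (Suc j) ps)" unfolding u using l by simp
  have "ud (ins j v ps) = udw 0 (take j ps) @ (last (0 # take j ps) > v) # (v > ps!j) # udw (ps!j) (drop (Suc j) ps)"
    unfolding ins_def ud_def udw_append d by simp
  then show ?thesis unfolding t dr by simp
qed

lemma ud_ins_end: "ud (ins (length ps) v ps) = ud ps @ [last (0 # ps) > v]"
  unfolding ins_def ud_def by (simp add: udw_append)

lemma last_in: "last (0 # xs) = 0 \<or> last (0 # xs) \<in> set xs"
  by (induction xs) auto

lemma ud_ins_max:
  assumes "j < length ps" "\<forall>y\<in>set ps. y < v" "0 < v"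
  shows "ud (ins j v ps) = UD j (ud ps)"
proof -
  have "last (0 # take j ps) < v" using last_in[of "take j ps"] assms(2,3) by (auto dest: in_set_takeD)
  moreover have "ps!j < v" using assms by auto
  ultimately show ?thesis unfolding ud_ins_gen[OF assms(1)] UD_def by auto
qed

lemma ud_ins_min:
  assumes "j < length ps" "\<forall>y\<in>set ps. v < y" "v < 0"
  shows "ud (ins j v ps) = DU j (ud ps)"
proof -
  have "last (0 # take j ps) > v" using last_in[of "take j ps"] assms(2,3) by (auto dest: in_set_takeD)
  moreover have "ps!j > v" using assms by auto
  ultimately show ?thesis unfolding ud_ins_gen[OF assms(1)] DU_def by auto
qed

lemma ud_ins_max_end:
  assumes "\<forall>y\<in>set ps. y < v" "0 < v"
  shows "ud (ins (length ps) v ps) = ud ps @ [False]"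
proof -
  have "last (0 # ps) < v" using last_in[of ps] assms by auto
  then show ?thesis unfolding ud_ins_end by auto
qed

lemma ud_ins_min_end:
  assumes "\<forall>y\<in>set ps. v < y" "v < 0"
  shows "ud (ins (length ps) v ps) = ud ps @ [True]"
proof -
  have "last (0 # ps) > v" using last_in[of ps] assms by auto
  then show ?thesis unfolding ud_ins_end by auto
qed



lemma sp_len: "ps \<in> signed_perms n \<Longrightarrow> length ps = n"
  unfolding signed_perms_def by simp

lemma sp_abs: "ps \<in> signed_perms n \<Longrightarrow> y \<in> set ps \<Longrightarrow> 1 \<le> \<bar>y\<bar> \<and> \<bar>y\<bar> \<le> int n"
proof -
  assume a: "ps \<in> signed_perms n" "y \<in> set ps"
  have "\<bar>y\<bar> \<in> set (map abs ps)" using a(2) by simp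
  also have "set (map abs ps) = {1..int n}" using a(1) unfolding signed_perms_def by blast
  finally show ?thesis by simp
qed

lemma sp_distinct: "ps \<in> signed_perms n \<Longrightarrow> distinct (0 # ps)"
proof -
  assume a: "ps \<in> signed_perms n"
  then have "distinct (map abs ps)" unfolding signed_perms_def by blast
  then have "distinct ps" by (simp add: distinct_map)
  moreover have "0 \<notin> set ps" using sp_abs[OF a, of 0] by auto
  ultimately show ?thesis by simp
qed

lemma card_sum_if: "card {j. j < (n::nat) \<and> P j} = (\<Sum>j<n. if P j then 1 else 0::nat)"
proof -
  have "card {j. j < n \<and> P j} = card {j \<in> {..<n}. P j}" by (rule arg_cong[where f=card]) auto
  also have "\<dots> = (\<Sum>j \<in> {j\<in>{..<n}. P j}. 1)" by (rule card_eq_sum)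
  also have "\<dots> = (\<Sum>j<n. if P j then 1 else 0)" by (rule sum.inter_filter) simp
  finally show ?thesis .
qed

lemma runB_ch:
  assumes "ps \<in> signed_perms n"
  shows "runB ps = 1 + ch (ud ps)"
proof -
  define p where "p = 0 # ps"
  define e where "e = ud ps"
  have len: "length ps = n" using sp_len[OF assms] .
  have le: "length e = n" unfolding e_def ud_def using len by simp
  have dp: "distinct p" unfolding p_def using sp_distinct[OF assms] .
  have lp: "length p = Suc n" unfolding p_def using len by simp
  have en: "i < n \<Longrightarrow> e!i = (p!i > p!(Suc i))" for i
    unfolding e_def ud_def p_def using len by (simp add: nth_udw)
  have neq: "i < Suc n \<Longrightarrow> j < Suc n \<Longrightarrow> i \<noteq> j \<Longrightarrow> p!i \<noteq> p!j" for i j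
    using dp lp by (simp add: nth_eq_iff_index_eq)
  have "{i \<in> {1..n-1}. (p!(i-1) < p!i \<and> p!i > p!(i+1)) \<or> (p!(i-1) > p!i \<and> p!i < p!(i+1))}
      = {j. j < n \<and> (0 < j \<and> e!(j-1) \<noteq> e!j)}"
  proof (rule set_eqI, rule iffI)
    fix i assume "i \<in> {i \<in> {1..n-1}. (p!(i-1) < p!i \<and> p!i > p!(i+1)) \<or> (p!(i-1) > p!i \<and> p!i < p!(i+1))}"
    then have i: "1 \<le> i" "i \<le> n - 1" and c: "(p!(i-1) < p!i \<and> p!i > p!(i+1)) \<or> (p!(i-1) > p!i \<and> p!i < p!(i+1))" by auto
    have "e!(i-1) = (p!(i-1) > p!i)" using en[of "i-1"] i by simp
    moreover have "e!i = (p!i > p!(Suc i))" using en[of i] i by simp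
    ultimately show "i \<in> {j. j < n \<and> (0 < j \<and> e!(j-1) \<noteq> e!j)}" using i c by auto
  next
    fix i assume "i \<in> {j. j < n \<and> (0 < j \<and> e!(j-1) \<noteq> e!j)}"
    then have i: "0 < i" "i < n" and c: "e!(i-1) \<noteq> e!i" by auto
    have "e!(i-1) = (p!(i-1) > p!i)" using en[of "i-1"] i by simp
    moreover have "e!i = (p!i > p!(Suc i))" using en[of i] i by simp
    moreover have "p!(i-1) \<noteq> p!i" using neq[of "i-1" i] i by simp
    moreover have "p!i \<noteq> p!(Suc i)" using neq[of i "Suc i"] i by simp
    ultimately show "i \<in> {i \<in> {1..n-1}. (p!(i-1) < p!i \<and> p!i > p!(i+1)) \<or> (p!(i-1) > p!i \<and> p!i < p!(i+1))}"
      using i c by auto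
  qed
  moreover have "card {j. j < n \<and> (0 < j \<and> e!(j-1) \<noteq> e!j)} = ch e"
    unfolding card_sum_if using sum_k1[of e] le by simp
  ultimately show ?thesis unfolding runB_def Let_def p_def e_def len by simp
qed

lemma desB_cnt:
  assumes "ps \<in> signed_perms n" "1 \<le> n"
  shows "desB ps = cnt (ud ps)"
proof -
  define p where "p = 0 # ps"
  define e where "e = ud ps"
  have len: "length ps = n" using sp_len[OF assms(1)] .
  have le: "length e = n" unfolding e_def ud_def using len by simp
  have en: "i < n \<Longrightarrow> e!i = (p!i > p!(Suc i))" for i
    unfolding e_def ud_def p_def using len by (simp add: nth_udw)
  have "{i \<in> {0..n-1}. p!i > p!(i+1)} = {i. i < length e \<and> id (e!i)}"
    using en le assms(2) by auto
  then show ?thesis unfolding desB_def Let_def cnt_def length_filter_conv_card p_def e_def len by simp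
qed

lemma finite_sp: "finite (signed_perms n)"
proof -
  have "signed_perms n \<subseteq> {xs. set xs \<subseteq> {-int n..int n} \<and> length xs = n}"
  proof
    fix xs assume xs: "xs \<in> signed_perms n"
    have "\<forall>y\<in>set xs. \<bar>y\<bar> \<le> int n" using sp_abs[OF xs] by blast
    then show "xs \<in> {xs. set xs \<subseteq> {-int n..int n} \<and> length xs = n}"
      using sp_len[OF xs] by (auto simp: abs_le_iff)
  qed
  moreover have "finite {xs. set xs \<subseteq> {-int n..int n} \<and> length xs = n}"
    by (rule finite_lists_length_eq) simp
  ultimately show ?thesis by (rule finite_subset)
qed



lemma length_ins: "j \<le> length ps \<Longrightarrow> length (ins j v ps) = Suc (length ps)"
  unfolding ins_def by simp

lemma map_ins: "map f (ins j v ps) = ins j (f v) (map f ps)"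
  unfolding ins_def by (simp add: take_map drop_map)

lemma set_ins: "set (ins j v ps) = insert v (set ps)"
proof -
  have "set ps = set (take j ps) \<union> set (drop j ps)" by (metis append_take_drop_id set_append)
  then show ?thesis unfolding ins_def by auto
qed

lemma distinct_mid: "distinct (xs @ v # ys) = distinct (v # xs @ ys)"
  by auto

lemma distinct_ins: "distinct (ins j v ps) \<longleftrightarrow> v \<notin> set ps \<and> distinct ps"
proof -
  have "distinct (take j ps @ v # drop j ps) = distinct (v # (take j ps @ drop j ps))" by (rule distinct_mid)
  note h = this
  show ?thesis unfolding ins_def by (simp only: h append_take_drop_id distinct.simps(2))
qed

lemma nth_ins: "j \<le> length ps \<Longrightarrow> i < Suc (length ps) \<Longrightarrow>
   ins j v ps ! i = (if i < j then ps!i else if i = j then v else ps!(i-1))"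
  unfolding ins_def by (auto simp: nth_append min_def)

lemma ins_in_sp:
  assumes ps: "ps \<in> signed_perms n" and j: "j \<le> n" and s: "\<bar>s\<bar> = int (Suc n)"
  shows "ins j s ps \<in> signed_perms (Suc n)"
proof -
  have len: "length ps = n" using sp_len[OF ps] .
  have da: "distinct (map abs ps)" and sa: "set (map abs ps) = {1..int n}" using ps unfolding signed_perms_def by blast+
  have m: "map abs (ins j s ps) = ins j (int (Suc n)) (map abs ps)" unfolding map_ins s ..
  have "int (Suc n) \<notin> set (map abs ps)" unfolding sa by simp
  then have "distinct (map abs (ins j s ps))" unfolding m distinct_ins using da by simp
  moreover have "set (map abs (ins j s ps)) = {1..int (Suc n)}" unfolding m set_ins sa by auto
  moreover have "length (ins j s ps) = Suc n" using length_ins[of j ps s] j len by simp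
  ultimately show ?thesis unfolding signed_perms_def by simp
qed

lemma sp_decomp:
  assumes q: "q \<in> signed_perms (Suc n)"
  shows "\<exists>ps j s. ps \<in> signed_perms n \<and> j \<le> n \<and> (s = int (Suc n) \<or> s = - int (Suc n)) \<and> q = ins j s ps"
proof -
  have len: "length q = Suc n" using sp_len[OF q] .
  have da: "distinct (map abs q)" and sa: "set (map abs q) = {1..int (Suc n)}" using q unfolding signed_perms_def by blast+
  have "int (Suc n) \<in> set (map abs q)" unfolding sa by simp
  then obtain k where k: "k < length q" "\<bar>q!k\<bar> = int (Suc n)" by (auto simp: in_set_conv_nth)
  define ps where "ps = take k q @ drop (Suc k) q"
  have qd: "q = take k q @ q!k # drop (Suc k) q" using k(1) by (rule id_take_nth_drop)
  have tk: "take k ps = take k q" unfolding ps_def using k(1) by simp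
  have dk: "drop k ps = drop (Suc k) q" unfolding ps_def using k(1) by simp
  have qi: "q = ins k (q!k) ps" unfolding ins_def tk dk using qd .
  have lps: "length ps = n" unfolding ps_def using k(1) len by simp
  have mq: "map abs q = ins k (int (Suc n)) (map abs ps)" using arg_cong[OF qi, of "map abs"] unfolding map_ins k(2) .
  have "distinct (map abs ps)" and nin: "int (Suc n) \<notin> set (map abs ps)" using da unfolding mq distinct_ins by auto
  moreover have "set (map abs ps) = {1..int n}"
  proof -
    have "insert (int (Suc n)) (set (map abs ps)) = {1..int (Suc n)}" using sa unfolding mq set_ins .
    moreover have "set (map abs ps) = insert (int (Suc n)) (set (map abs ps)) - {int (Suc n)}"
      using nin by (rule Diff_insert_absorb[symmetric])
    ultimately have "set (map abs ps) = {1..int (Suc n)} - {int (Suc n)}" by simp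
    also have "\<dots> = {1..int n}" by auto
    finally show ?thesis .
  qed
  ultimately have "ps \<in> signed_perms n" unfolding signed_perms_def using lps by simp
  moreover have "k \<le> n" using k(1) len by simp
  moreover have "q!k = int (Suc n) \<or> q!k = - int (Suc n)" using k(2) by (auto simp: abs_if split: if_splits)
  ultimately show ?thesis using qi by blast
qed

lemma ins_inj:
  assumes ps: "ps \<in> signed_perms n" and ps': "ps' \<in> signed_perms n"
    and j: "j \<le> n" and j': "j' \<le> n" and s: "\<bar>s\<bar> = int (Suc n)" and s': "\<bar>s'\<bar> = int (Suc n)"
    and eq: "ins j s ps = ins j' s' ps'"
  shows "ps = ps' \<and> j = j' \<and> s = s'"
proof -
  have len: "length ps = n" "length ps' = n" using sp_len[OF ps] sp_len[OF ps'] by auto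
  have qj: "ins j s ps ! j = s" using nth_ins[of j ps j s] j len by simp
  have jj: "j = j'"
  proof (rule ccontr)
    assume ne: "j \<noteq> j'"
    have "ins j' s' ps' ! j = (if j < j' then ps'!j else ps'!(j-1))"
      using nth_ins[of j' ps' j s'] j j' len ne by simp
    moreover have "ps'!j \<in> set ps'" if "j < j'" using that j' len by simp
    moreover have "ps'!(j-1) \<in> set ps'" if "\<not> j < j'" using that ne j len by simp
    ultimately have "ins j' s' ps' ! j \<in> set ps'" by (auto split: if_splits)
    then have "\<bar>ins j' s' ps' ! j\<bar> \<le> int n" using sp_abs[OF ps'] by blast
    then show False using eq qj s by simp
  qed
  have ss: "s = s'" using qj eq nth_ins[of j' ps' j' s'] j' len jj by simp
  have "take j ps @ s # drop j ps = take j ps' @ s # drop j ps'" using eq unfolding ins_def jj ss .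
  then have "take j ps = take j ps' \<and> drop j ps = drop j ps'"
    using j len by (subst (asm) append_eq_append_conv) auto
  then have "ps = ps'" by (metis append_take_drop_id)
  then show ?thesis using jj ss by simp
qed

lemma sum_sp_Suc:
  fixes g :: "int list \<Rightarrow> 'a::comm_monoid_add"
  shows "(\<Sum>q\<in>signed_perms (Suc n). g q) = (\<Sum>ps\<in>signed_perms n.
      (\<Sum>j<n. g (ins j (int (Suc n)) ps) + g (ins j (- int (Suc n)) ps)) + g (ins n (int (Suc n)) ps) + g (ins n (- int (Suc n)) ps))"
proof -
  define M where "M = int (Suc n)"
  define h where "h = (\<lambda>(ps, j, s). ins j s ps)"
  define S where "S = signed_perms n \<times> ({..n} \<times> {M, -M})"
  have Mne: "M \<noteq> -M" unfolding M_def by simp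
  have inj: "inj_on h S"
  proof (rule inj_onI)
    fix x y assume xy: "x \<in> S" "y \<in> S" "h x = h y"
    obtain ps j s where x: "x = (ps, j, s)" by (cases x) auto
    obtain ps' j' s' where y: "y = (ps', j', s')" by (cases y) auto
    have a: "ps \<in> signed_perms n" "j \<le> n" "s = M \<or> s = -M" using xy(1) unfolding x S_def by auto
    have b: "ps' \<in> signed_perms n" "j' \<le> n" "s' = M \<or> s' = -M" using xy(2) unfolding y S_def by auto
    have c: "ins j s ps = ins j' s' ps'" using xy(3) unfolding x y h_def by simp
    have "\<bar>s\<bar> = int (Suc n)" "\<bar>s'\<bar> = int (Suc n)" using a(3) b(3) unfolding M_def by auto
    from ins_inj[OF a(1) b(1) a(2) b(2) this c] show "x = y" unfolding x y by simp
  qed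
  have img: "h ` S = signed_perms (Suc n)"
  proof
    show "h ` S \<subseteq> signed_perms (Suc n)" unfolding S_def h_def M_def by (auto intro!: ins_in_sp)
  next
    show "signed_perms (Suc n) \<subseteq> h ` S"
    proof
      fix q assume "q \<in> signed_perms (Suc n)"
      then obtain ps j s where "ps \<in> signed_perms n" "j \<le> n" "s = M \<or> s = -M" "q = ins j s ps"
        using sp_decomp unfolding M_def by blast
      then show "q \<in> h ` S" unfolding S_def h_def by (auto intro!: image_eqI[where x="(ps, j, s)"])
    qed
  qed
  have "(\<Sum>q\<in>signed_perms (Suc n). g q) = (\<Sum>x\<in>S. g (h x))"
    using sum.reindex[OF inj, of g] img by simp
  also have "\<dots> = (\<Sum>ps\<in>signed_perms n. \<Sum>js\<in>{..n} \<times> {M, -M}. g (ins (fst js) (snd js) ps))"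
    unfolding S_def h_def by (subst sum.cartesian_product) (simp add: case_prod_beta)
  also have "\<dots> = (\<Sum>ps\<in>signed_perms n. \<Sum>j\<in>{..n}. \<Sum>s\<in>{M, -M}. g (ins j s ps))"
    by (rule sum.cong[OF refl]) (simp add: sum.cartesian_product case_prod_beta)
  also have "\<dots> = (\<Sum>ps\<in>signed_perms n. \<Sum>j\<in>{..n}. g (ins j M ps) + g (ins j (-M) ps))"
    using Mne by simp
  also have "\<dots> = (\<Sum>ps\<in>signed_perms n.
      (\<Sum>j<n. g (ins j M ps) + g (ins j (-M) ps)) + g (ins n M ps) + g (ins n (-M) ps))"
    by (simp add: lessThan_Suc_atMost[symmetric] add.assoc)
  finally show ?thesis unfolding M_def .
qed



lemma udw_neg: "distinct (a # xs) \<Longrightarrow> udw (- a) (map uminus xs) = map Not (udw a xs)"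
proof (induction xs arbitrary: a)
  case Nil then show ?case by simp
next
  case (Cons x xs)
  have "a \<noteq> x" using Cons.prems by simp
  then have "(- a > - x) = (\<not> a > x)" by auto
  moreover have "distinct (x # xs)" using Cons.prems by simp
  ultimately show ?case using Cons.IH by simp
qed

lemma ch_not: "ch (map Not e) = ch e"
  by (induction e rule: ch.induct) auto

lemma mm: "map uminus (map uminus xs) = (xs::int list)"
  by (induction xs) auto

lemma abs_neg_map: "map abs (map uminus xs) = map abs (xs::int list)"
  by (induction xs) auto

lemma neg_sp: "ps \<in> signed_perms n \<Longrightarrow> map uminus ps \<in> signed_perms n"
  unfolding signed_perms_def by (simp only: abs_neg_map length_map mem_Collect_eq)

lemma runB_neg:
  assumes "ps \<in> signed_perms n"
  shows "runB (map uminus ps) = runB ps"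
proof -
  have "ud (map uminus ps) = map Not (ud ps)"
    using udw_neg[OF sp_distinct[OF assms]] unfolding ud_def by simp
  then show ?thesis using runB_ch[OF assms] runB_ch[OF neg_sp[OF assms]] ch_not by simp
qed

lemma sym_sum:
  fixes x :: "'a::comm_semiring_1"
  assumes "1 \<le> n"
  shows "(\<Sum>ps\<in>signed_perms n. x ^ runB ps) = 2 * R_B_pos n x"
proof -
  define A where "A = {ps \<in> signed_perms n. ps!0 > 0}"
  define A' where "A' = {ps \<in> signed_perms n. ps!0 < 0}"
  have nz: "ps!0 \<noteq> 0" if "ps \<in> signed_perms n" for ps
  proof -
    have "ps!0 \<in> set ps" using sp_len[OF that] assms by simp
    then show ?thesis using sp_abs[OF that, of "ps!0"] by auto
  qed
  have un: "signed_perms n = A \<union> A'" unfolding A_def A'_def using nz by force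
  have dj: "A \<inter> A' = {}" unfolding A_def A'_def by auto
  have fA: "finite A" "finite A'" unfolding A_def A'_def using finite_sp by auto
  have img: "A' = map uminus ` A"
  proof
    show "map uminus ` A \<subseteq> A'" unfolding A_def A'_def using neg_sp assms sp_len by fastforce
  next
    show "A' \<subseteq> map uminus ` A"
    proof
      fix q assume q: "q \<in> A'"
      have "map uminus q \<in> A" using q neg_sp assms sp_len unfolding A_def A'_def by fastforce
      moreover have "q = map uminus (map uminus q)" by (simp only: mm)
      ultimately show "q \<in> map uminus ` A" by blast
    qed
  qed
  have inj: "inj_on (map uminus) A" by (rule inj_onI) (metis mm)
  have "(\<Sum>ps\<in>A'. x ^ runB ps) = (\<Sum>ps\<in>A. x ^ runB (map uminus ps))"
    unfolding img by (rule sum.reindex[OF inj, unfolded comp_def])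
  also have "\<dots> = (\<Sum>ps\<in>A. x ^ runB ps)"
    by (rule sum.cong[OF refl]) (auto simp: A_def runB_neg)
  finally have e: "(\<Sum>ps\<in>A'. x ^ runB ps) = (\<Sum>ps\<in>A. x ^ runB ps)" .
  have "(\<Sum>ps\<in>signed_perms n. x ^ runB ps) = (\<Sum>ps\<in>A. x ^ runB ps) + (\<Sum>ps\<in>A'. x ^ runB ps)"
    unfolding un using fA dj by (rule sum.union_disjoint)
  then show ?thesis unfolding e R_B_pos_def A_def by (simp add: mult_2)
qed



definition Pt :: "nat \<Rightarrow> nat \<Rightarrow> complex \<Rightarrow> complex" where
  "Pt n c w = (1 - w^2)^(Suc c) * (1 + w^2)^(n - 1 - c)"
definition DPt :: "nat \<Rightarrow> nat \<Rightarrow> complex \<Rightarrow> complex" where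
  "DPt n c w = of_nat (Suc c) * (1 - w^2)^c * (-2*w) * (1+w^2)^(n - 1 - c)
     + (1-w^2)^(Suc c) * (of_nat (n - 1 - c) * (1+w^2)^(n - 1 - c - 1) * (2*w))"
definition Qt :: "nat \<Rightarrow> nat \<Rightarrow> complex \<Rightarrow> complex" where
  "Qt n d w = (1 - w^2) * (1 - w)^d * (1 + w)^(n - d)"
definition DQt :: "nat \<Rightarrow> nat \<Rightarrow> complex \<Rightarrow> complex" where
  "DQt n d w = (-2*w) * (1 - w)^d * (1 + w)^(n - d) + (1 - w^2) * (of_nat d * (1-w)^(d-1) * (-1)) * (1 + w)^(n - d)
      + (1 - w^2) * (1 - w)^d * (of_nat (n - d) * (1+w)^(n - d - 1))"

lemma DPt: "((Pt n c) has_field_derivative DPt n c w) (at w)"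
proof -
  have "((\<lambda>w. (1 - w^2)^(Suc c) * (1 + w^2)^(n - 1 - c)) has_field_derivative DPt n c w) (at w)"
    unfolding DPt_def by (rule derivative_eq_intros refl | simp)+
  then show ?thesis unfolding Pt_def[abs_def] .
qed

lemma DQt: "((Qt n d) has_field_derivative DQt n d w) (at w)"
proof -
  have "((\<lambda>w. (1 - w^2) * (1 - w)^d * (1 + w)^(n - d)) has_field_derivative DQt n d w) (at w)"
    unfolding DQt_def by ((rule derivative_eq_intros refl | simp)+) (simp add: algebra_simps)
  then show ?thesis unfolding Qt_def[abs_def] .
qed

lemma Prec0:
  fixes w U :: complex and c :: nat
  defines "u \<equiv> 1 - w^2" and "v \<equiv> 1 + w^2"
  shows "3 * (u * u * U) + of_nat (2*c+1) * (u * U * v)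
    = (2 * of_nat (c + 1) * u + 3 * u - v) * (u * U)
      - 2 * w * u * (of_nat (Suc c) * U * (- 2 * w))"
  unfolding u_def v_def by (simp add: algebra_simps) algebra

lemma PrecS:
  fixes w U V :: complex and c k :: nat
  defines "u \<equiv> 1 - w^2" and "v \<equiv> 1 + w^2"
  shows "of_nat (2*Suc k) * (u * u * u * U * V) + 3 * (u * u * U * (v * V)) + of_nat (2*c+1) * (u * U * (v * (v * V)))
    = (2 * of_nat (c + Suc k + 1) * u + 3 * u - v) * (u * U * (v * V))
      - 2 * w * u * (of_nat (Suc c) * U * (- 2 * w) * (v * V) + u * U * (of_nat (Suc k) * V * (2 * w)))"
  unfolding u_def v_def by (simp add: algebra_simps) algebra

lemma P_term:
  assumes "1 \<le> n" "c \<le> n - 1"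
  shows "of_nat (2*n - 2 - 2*c) * Pt (Suc n) (Suc (Suc c)) w + 3 * Pt (Suc n) (Suc c) w + of_nat (2*c+1) * Pt (Suc n) c w
    = (2 * of_nat n * (1 - w^2) + 3 * (1 - w^2) - (1 + w^2)) * Pt n c w - 2 * w * (1 - w^2) * DPt n c w"
proof -
  obtain k where n: "n = c + k + 1" using assms by (metis add.commute add_diff_inverse_nat le_add_diff_inverse2 less_one not_le)
  show ?thesis
  proof (cases k)
    case 0
    show ?thesis using Prec0[of w "(1 - w^2)^c" c] unfolding Pt_def DPt_def n 0 by (simp add: power_Suc mult_ac)
  next
    case (Suc k')
    show ?thesis using PrecS[of k' w "(1 - w^2)^c" "(1+w^2)^k'" c] unfolding Pt_def DPt_def n Suc
      by (simp add: power_Suc mult_ac)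
  qed
qed

lemma QrecG0:
  fixes w A B A1 B1 D K :: complex
  assumes "D * A * (1 - w) = D * A1" and "K * B * (1 + w) = K * B1"
  shows "(2*K+1) * ((1 - w^2) * ((1-w) * A1) * B1) + (2*D+1) * ((1 - w^2) * A1 * ((1+w) * B1))
    = (2 * (D + K) * (1 - w^2) + 3 * (1 - w^2) - (1 + w^2)) * ((1 - w^2) * A1 * B1)
      - 2 * w * (1 - w^2) * ((-2*w) * A1 * B1 + (1 - w^2) * (D * A * (-1)) * B1 + (1 - w^2) * A1 * (K * B))"
  using assms by algebra

lemma QrecG:
  fixes w A B A1 B1 :: complex and d k :: nat
  assumes "of_nat d * A * (1 - w) = of_nat d * A1" and "of_nat k * B * (1 + w) = of_nat k * B1"
  shows "of_nat (2*k+1) * ((1 - w^2) * ((1-w) * A1) * B1) + of_nat (2*d+1) * ((1 - w^2) * A1 * ((1+w) * B1))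
    = (2 * of_nat (d + k) * (1 - w^2) + 3 * (1 - w^2) - (1 + w^2)) * ((1 - w^2) * A1 * B1)
      - 2 * w * (1 - w^2) * ((-2*w) * A1 * B1 + (1 - w^2) * (of_nat d * A * (-1)) * B1 + (1 - w^2) * A1 * (of_nat k * B))"
  using QrecG0[OF assms] by (simp only: of_nat_add of_nat_mult of_nat_numeral of_nat_1)

lemma Q_term:
  assumes "d \<le> n"
  shows "of_nat (2 * (n - d) + 1) * Qt (Suc n) (Suc d) w + of_nat (2 * d + 1) * Qt (Suc n) d w
    = (2 * of_nat n * (1 - w^2) + 3 * (1 - w^2) - (1 + w^2)) * Qt n d w - 2 * w * (1 - w^2) * DQt n d w"
proof -
  obtain k where n: "n = d + k" using assms le_Suc_ex by blast
  have h1: "of_nat d * (1-w)^(d-1) * (1 - w) = of_nat d * (1-w)^d" by (cases d) simp_all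
  have h2: "of_nat k * (1+w)^(k-1) * (1 + w) = of_nat k * (1+w)^k" by (cases k) simp_all
  have e1: "Suc (d + k) - Suc d = k" "Suc (d + k) - d = Suc k" "d + k - d = k" by simp_all
  show ?thesis using QrecG[OF h1 h2] unfolding Qt_def DQt_def n e1 by (simp add: mult_ac)
qed


definition P :: "nat \<Rightarrow> complex \<Rightarrow> complex" where "P n w = (\<Sum>ps\<in>signed_perms n. Pt n (ch (ud ps)) w)"
definition DP :: "nat \<Rightarrow> complex \<Rightarrow> complex" where "DP n w = (\<Sum>ps\<in>signed_perms n. DPt n (ch (ud ps)) w)"
definition Q :: "nat \<Rightarrow> complex \<Rightarrow> complex" where "Q n w = (\<Sum>ps\<in>signed_perms n. Qt n (cnt (ud ps)) w)"
definition DQ :: "nat \<Rightarrow> complex \<Rightarrow> complex" where "DQ n w = (\<Sum>ps\<in>signed_perms n. DQt n (cnt (ud ps)) w)"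

lemma P_deriv: "(P n has_field_derivative DP n w) (at w)"
  unfolding P_def[abs_def] DP_def by (rule DERIV_sum) (rule DPt)

lemma Q_deriv: "(Q n has_field_derivative DQ n w) (at w)"
  unfolding Q_def[abs_def] DQ_def by (rule DERIV_sum) (rule DQt)

lemma sp_bounds:
  assumes "ps \<in> signed_perms n"
  shows "\<forall>y\<in>set ps. y < int (Suc n)" "\<forall>y\<in>set ps. - int (Suc n) < y"
  using sp_abs[OF assms] by (auto simp: abs_le_iff) (smt (verit))+

lemma ud_len: "ps \<in> signed_perms n \<Longrightarrow> length (ud ps) = n"
  unfolding ud_def using sp_len by simp

lemma ins_rewrite:
  assumes ps: "ps \<in> signed_perms n"
  shows "(\<Sum>j<n. G (ud (ins j (int (Suc n)) ps)) + G (ud (ins j (- int (Suc n)) ps))) + G (ud (ins n (int (Suc n)) ps)) + G (ud (ins n (- int (Suc n)) ps))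
     = (\<Sum>j<length (ud ps). G (UD j (ud ps)) + G (DU j (ud ps))) + G (ud ps @ [False]) + G (ud ps @ [True])"
proof -
  have len: "length ps = n" using sp_len[OF ps] .
  note b = sp_bounds[OF ps]
  have "(\<Sum>j<n. G (ud (ins j (int (Suc n)) ps)) + G (ud (ins j (- int (Suc n)) ps)))
     = (\<Sum>j<length (ud ps). G (UD j (ud ps)) + G (DU j (ud ps)))"
    unfolding ud_len[OF ps]
  proof (rule sum.cong[OF refl])
    fix j assume "j \<in> {..<n}"
    then have j: "j < length ps" using len by simp
    show "G (ud (ins j (int (Suc n)) ps)) + G (ud (ins j (- int (Suc n)) ps)) = G (UD j (ud ps)) + G (DU j (ud ps))"
      using ud_ins_max[OF j b(1)] ud_ins_min[OF j b(2)] by simp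
  qed
  moreover have "ud (ins n (int (Suc n)) ps) = ud ps @ [False]"
    using ud_ins_max_end[OF b(1)] len by simp
  moreover have "ud (ins n (- int (Suc n)) ps) = ud ps @ [True]"
    using ud_ins_min_end[OF b(2)] len by simp
  ultimately show ?thesis by simp
qed

lemma P_Suc:
  assumes "1 \<le> n"
  shows "P (Suc n) w = (2 * of_nat n * (1 - w^2) + 3 * (1 - w^2) - (1 + w^2)) * P n w - 2 * w * (1 - w^2) * DP n w"
proof -
  define G where "G = (\<lambda>e. Pt (Suc n) (ch e) w)"
  have "P (Suc n) w = (\<Sum>q\<in>signed_perms (Suc n). G (ud q))" unfolding P_def G_def ..
  also have "\<dots> = (\<Sum>ps\<in>signed_perms n. (\<Sum>j<n. G (ud (ins j (int (Suc n)) ps)) + G (ud (ins j (- int (Suc n)) ps))) + G (ud (ins n (int (Suc n)) ps)) + G (ud (ins n (- int (Suc n)) ps)))"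
    by (rule sum_sp_Suc)
  also have "\<dots> = (\<Sum>ps\<in>signed_perms n. (2 * of_nat n * (1 - w^2) + 3 * (1 - w^2) - (1 + w^2)) * Pt n (ch (ud ps)) w - 2 * w * (1 - w^2) * DPt n (ch (ud ps)) w)"
  proof (rule sum.cong[OF refl])
    fix ps assume ps: "ps \<in> signed_perms n"
    have ne: "ud ps \<noteq> []" using ud_len[OF ps] assms by auto
    have cle: "ch (ud ps) \<le> n - 1" using ch_le[of "ud ps"] ud_len[OF ps] by simp
    show "(\<Sum>j<n. G (ud (ins j (int (Suc n)) ps)) + G (ud (ins j (- int (Suc n)) ps))) + G (ud (ins n (int (Suc n)) ps)) + G (ud (ins n (- int (Suc n)) ps))
      = (2 * of_nat n * (1 - w^2) + 3 * (1 - w^2) - (1 + w^2)) * Pt n (ch (ud ps)) w - 2 * w * (1 - w^2) * DPt n (ch (ud ps)) w"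
      unfolding ins_rewrite[OF ps] unfolding G_def
      using word_runs[OF ne, of "\<lambda>c. Pt (Suc n) c w"] P_term[OF assms cle, of w] ud_len[OF ps] by simp
  qed
  also have "\<dots> = (2 * of_nat n * (1 - w^2) + 3 * (1 - w^2) - (1 + w^2)) * P n w - 2 * w * (1 - w^2) * DP n w"
    unfolding P_def DP_def by (simp add: sum_subtractf sum_distrib_left)
  finally show ?thesis .
qed

lemma Q_Suc:
  assumes "1 \<le> n"
  shows "Q (Suc n) w = (2 * of_nat n * (1 - w^2) + 3 * (1 - w^2) - (1 + w^2)) * Q n w - 2 * w * (1 - w^2) * DQ n w"
proof -
  define G where "G = (\<lambda>e. Qt (Suc n) (cnt e) w)"
  have "Q (Suc n) w = (\<Sum>q\<in>signed_perms (Suc n). G (ud q))" unfolding Q_def G_def ..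
  also have "\<dots> = (\<Sum>ps\<in>signed_perms n. (\<Sum>j<n. G (ud (ins j (int (Suc n)) ps)) + G (ud (ins j (- int (Suc n)) ps))) + G (ud (ins n (int (Suc n)) ps)) + G (ud (ins n (- int (Suc n)) ps)))"
    by (rule sum_sp_Suc)
  also have "\<dots> = (\<Sum>ps\<in>signed_perms n. (2 * of_nat n * (1 - w^2) + 3 * (1 - w^2) - (1 + w^2)) * Qt n (cnt (ud ps)) w - 2 * w * (1 - w^2) * DQt n (cnt (ud ps)) w)"
  proof (rule sum.cong[OF refl])
    fix ps assume ps: "ps \<in> signed_perms n"
    have dle: "cnt (ud ps) \<le> n" using cnt_le[of "ud ps"] ud_len[OF ps] by simp
    show "(\<Sum>j<n. G (ud (ins j (int (Suc n)) ps)) + G (ud (ins j (- int (Suc n)) ps))) + G (ud (ins n (int (Suc n)) ps)) + G (ud (ins n (- int (Suc n)) ps))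
      = (2 * of_nat n * (1 - w^2) + 3 * (1 - w^2) - (1 + w^2)) * Qt n (cnt (ud ps)) w - 2 * w * (1 - w^2) * DQt n (cnt (ud ps)) w"
      unfolding ins_rewrite[OF ps] unfolding G_def
      using word_des[of "\<lambda>d. Qt (Suc n) d w" "ud ps"] Q_term[OF dle, of w] ud_len[OF ps] by simp
  qed
  also have "\<dots> = (2 * of_nat n * (1 - w^2) + 3 * (1 - w^2) - (1 + w^2)) * Q n w - 2 * w * (1 - w^2) * DQ n w"
    unfolding Q_def DQ_def by (simp add: sum_subtractf sum_distrib_left)
  finally show ?thesis .
qed

lemma sp0: "signed_perms 0 = {[]}"
  unfolding signed_perms_def by auto

lemma PQ1: "P 1 w = Q 1 w"
proof -
  have P1: "P (Suc 0) w = Pt 1 (ch (ud [1])) w + Pt 1 (ch (ud [-1])) w"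
    unfolding P_def using sum_sp_Suc[of "\<lambda>q. Pt (Suc 0) (ch (ud q)) w" 0] by (simp add: sp0 ins_def)
  have Q1: "Q (Suc 0) w = Qt 1 (cnt (ud [1])) w + Qt 1 (cnt (ud [-1])) w"
    unfolding Q_def using sum_sp_Suc[of "\<lambda>q. Qt (Suc 0) (cnt (ud q)) w" 0] by (simp add: sp0 ins_def)
  have "ud [1] = [False]" "ud [-1] = [True]" unfolding ud_def by simp_all
  then show ?thesis using P1 Q1 unfolding Pt_def Qt_def by (simp add: cnt_def algebra_simps) (metis add_right_cancel)
qed

lemma PQ: "1 \<le> n \<Longrightarrow> P n = Q n"
proof (induction n rule: nat_induct_at_least)
  case base
  show ?case using PQ1 by auto
next
  case (Suc n)
  show ?case
  proof
    fix w
    have "DP n w = DQ n w" using P_deriv[of n w] Q_deriv[of n w] unfolding Suc.IH by (rule DERIV_unique)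
    then show "P (Suc n) w = Q (Suc n) w" unfolding P_Suc[OF Suc.hyps] Q_Suc[OF Suc.hyps] Suc.IH by simp
  qed
qed



lemma pow_frac:
  fixes U V :: complex
  assumes "V \<noteq> 0"
  shows "(U / V) ^ m = U ^ m * V ^ k / V ^ (m + k)"
proof -
  have "V ^ k \<noteq> 0" using assms by simp
  then have "U ^ m * V ^ k / (V ^ m * V ^ k) = U ^ m / V ^ m" by simp
  then show ?thesis by (simp add: power_add power_divide)
qed

theorem mainTheorem16:
  fixes n :: nat and x w :: complex
  assumes "n \<ge> 1"
    and "x \<noteq> -1"
    and "w\<^sup>2 = (1 - x) / (1 + x)"
    and "w \<noteq> -1"
  shows "R_B_pos n x
    = x / 2 * ((1 + x) / 2) ^ (n - 1) * (1 + w) ^ n * eulerB n ((1 - w) / (1 + w))"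
proof -
  have x1: "1 + x \<noteq> 0"
  proof
    assume "1 + x = 0"
    then have "x = -1" by algebra
    then show False using assms(2) by simp
  qed
  have w1: "1 + w \<noteq> 0"
  proof
    assume "1 + w = 0"
    then have "w = -1" by algebra
    then show False using assms(4) by simp
  qed
  have v: "1 + w^2 = 2 / (1 + x)" using assms(3) x1 by (simp add: field_simps)
  have u: "1 - w^2 = 2 * x / (1 + x)" using assms(3) x1 by (simp add: field_simps)
  have vnz: "1 + w^2 \<noteq> 0" using v x1 by simp
  have xv: "x * (1 + w^2) = 1 - w^2" unfolding u v by simp
  have xuv: "x = (1 - w^2) / (1 + w^2)" using xv vnz by (simp add: field_simps)
  have hx: "(1 + x) / 2 = 1 / (1 + w^2)" unfolding v using x1 by (simp add: field_simps)
  define S where "S = (\<Sum>ps\<in>signed_perms n. (1 - w)^(cnt (ud ps)) * (1 + w)^(n - cnt (ud ps)))"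
  have L: "2 * R_B_pos n x = P n w / (1 + w^2)^n"
  proof -
    have "2 * R_B_pos n x = (\<Sum>ps\<in>signed_perms n. x ^ runB ps)" using sym_sum[OF assms(1), of x] by simp
    also have "\<dots> = (\<Sum>ps\<in>signed_perms n. Pt n (ch (ud ps)) w / (1 + w^2)^n)"
    proof (rule sum.cong[OF refl])
      fix ps assume ps: "ps \<in> signed_perms n"
      define c where "c = ch (ud ps)"
      have cle: "c \<le> n - 1" using ch_le[of "ud ps"] ud_len[OF ps] unfolding c_def by simp
      obtain k where n: "n = Suc c + k" using cle assms(1) by (metis Suc_le_mono add_Suc le_add_diff_inverse le_diff_conv le_eq_less_or_eq plus_1_eq_Suc)
      have "x ^ runB ps = ((1 - w^2) / (1 + w^2)) ^ Suc c" unfolding runB_ch[OF ps] c_def xuv by simp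
      also have "\<dots> = Pt n c w / (1 + w^2)^n"
        unfolding Pt_def n using pow_frac[OF vnz, of "1 - w^2" "Suc c" k] by simp
      finally show "x ^ runB ps = Pt n (ch (ud ps)) w / (1 + w^2)^n" unfolding c_def .
    qed
    also have "\<dots> = P n w / (1 + w^2)^n" unfolding P_def by (simp add: sum_divide_distrib)
    finally show ?thesis .
  qed
  have E: "(1 + w)^n * eulerB n ((1 - w) / (1 + w)) = S"
  proof -
    have "(1 + w)^n * eulerB n ((1 - w) / (1 + w)) = (\<Sum>ps\<in>signed_perms n. (1 + w)^n * ((1 - w) / (1 + w)) ^ desB ps)"
      unfolding eulerB_def by (simp add: sum_distrib_left)
    also have "\<dots> = S" unfolding S_def
    proof (rule sum.cong[OF refl])
      fix ps assume ps: "ps \<in> signed_perms n"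
      define d where "d = cnt (ud ps)"
      have dle: "d \<le> n" using cnt_le[of "ud ps"] ud_len[OF ps] unfolding d_def by simp
      obtain k where n: "n = d + k" using dle le_Suc_ex by blast
      have "(1 + w)^n * ((1 - w) / (1 + w)) ^ d = (1 - w)^d * (1 + w)^(n - d)"
        unfolding n using w1 by (simp add: power_add power_divide field_simps)
      then show "(1 + w)^n * ((1 - w) / (1 + w)) ^ desB ps = (1 - w)^(cnt (ud ps)) * (1 + w)^(n - cnt (ud ps))"
        unfolding desB_cnt[OF ps assms(1)] d_def .
    qed
    finally show ?thesis .
  qed
  have QS: "Q n w = (1 - w^2) * S"
    unfolding Q_def S_def Qt_def by (simp add: sum_distrib_left mult.assoc)
  have PQn: "P n w = Q n w" using PQ[OF assms(1)] by simp
  obtain m where m: "n = Suc m" using assms(1) by (cases n) auto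
  have R2: "2 * R_B_pos n x = (1 - w^2) * S / (1 + w^2)^n" using L PQn QS by simp
  have R3: "2 * (x / 2 * ((1 + x) / 2) ^ (n - 1) * S) = (1 - w^2) * S / (1 + w^2)^n"
  proof -
    have g: "\<And>U V :: complex. V \<noteq> 0 \<Longrightarrow> 2 * (U / V / 2 * (1 / V) ^ m * S) = U * S / V ^ Suc m"
      by (simp add: power_divide field_simps)
    have e1: "((1 + x) / 2) ^ (n - 1) = (1 / (1 + w^2)) ^ m" unfolding m diff_Suc_1 hx ..
    have "x / 2 * ((1 + x) / 2) ^ (n - 1) * S = x / 2 * (1 / (1 + w^2)) ^ m * S" unfolding e1 ..
    also have "\<dots> = (1 - w^2) / (1 + w^2) / 2 * (1 / (1 + w^2)) ^ m * S" by (subst xuv) (rule refl)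
    finally have eq: "x / 2 * ((1 + x) / 2) ^ (n - 1) * S = (1 - w^2) / (1 + w^2) / 2 * (1 / (1 + w^2)) ^ m * S" .
    show ?thesis unfolding eq unfolding m by (rule g[OF vnz])
  qed
  have two: "(2::complex) \<noteq> 0" by simp
  have "2 * R_B_pos n x = 2 * (x / 2 * ((1 + x) / 2) ^ (n - 1) * S)" unfolding R2 R3 ..
  then have "R_B_pos n x = x / 2 * ((1 + x) / 2) ^ (n - 1) * S" using mult_left_cancel[OF two] by blast
  then show ?thesis using E by (simp add: mult.assoc)
qed

end
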